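(* Consider a run of RLS-GP on the target $\mathrm{OR}_n$, using $F = \{\mathrm{AND}, \mathrm{OR}\}$, $L = \{x_1,\ldots,x_n\}$, the complete truth table as fitness, and a tree size limit $\ell = (1+c) n$. Let $T$ be the number of iterations before the optimum is found. If $c = \Theta(1)$ (i.e. $c > 0$ is a constant), then $E[T] = O(\ell\, n \log^2 n)$.
   Context: Programs are finite rooted binary trees (the empty tree is allowed) whose internal nodes are labelled by binary Boolean functions from $F$ and whose leaves are labelled by literals from $L$; a program computes a Boolean function of $(x_1,\dots,x_n)$ in the obvious way. $\mathrm{OR}_n(x) = x_1 \vee \dots \vee x_n$. The fitness (to be minimised) of a program $X$ is $f(X) = |\{x \in \{0,1\}^n : X(x) \ne \mathrm{OR}_n(x)\}|$; the optimum is a tree of fitness $0$. LeafCount$(X)$ is the number of leaves of $X$. HVL-Prime with subtree deletion, applied to a tree $X$: choose $op \in \{\mathrm{INS}, \mathrm{DEL}, \mathrm{SUB}\}$, a literal $l \in L$ and a function $g \in F$, independently and uniformly at random. If $X$ is empty, the result is the single leaf $l$. Otherwise: if $op = \mathrm{INS}$, choose a node $x$ of $X$ uniformly at random and replace it by a new node labelled $g$ whose two children are the subtree rooted at $x$ and a new leaf $l$, in uniformly random order; if $op = \mathrm{DEL}$, choose a node $x$ of $X$ (leaf or internal) uniformly at random and replace the parent of $x$ by the sibling of $x$; if $op = \mathrm{SUB}$, choose a leaf of $X$ uniformly at random and replace it by $l$. RLS-GP with tree size limit $\ell$: start with the empty tree $X$; in each iteration let $X' := $ HVL-Prime$(X)$,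 and if LeafCount$(X') \le \ell$ and $f(X') \le f(X)$ then set $X := X'$. Asymptotics are as $n \to \infty$. *)

theory Defs
  imports "HOL-Probability.Probability"
begin

text \<open>The possibly empty tree is
  represented as a gp option (None = empty tree).\<close>

datatype fn = AND | OR

datatype gp = Leaf nat | Node fn gp gp

datatype hvl_op = INS | DEL | SUB

fun num_nodes :: "gp \<Rightarrow> nat" where
  "num_nodes (Leaf i) = 1"
| "num_nodes (Node g a b) = Suc (num_nodes a + num_nodes b)"

fun leaf_count :: "gp \<Rightarrow> nat" where
  "leaf_count (Leaf i) = 1"
| "leaf_count (Node g a b) = leaf_count a + leaf_count b"

definition LeafCount :: "gp option \<Rightarrow> nat" where
  "LeafCount X = (case X of None \<Rightarrow> 0 | Some t \<Rightarrow> leaf_count t)"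

fun eval :: "gp \<Rightarrow> nat set \<Rightarrow> bool" where
  "eval (Leaf i) S = (i \<in> S)"
| "eval (Node AND a b) S = (eval a S \<and> eval b S)"
| "eval (Node OR a b) S = (eval a S \<or> eval b S)"

text \<open>Fitness: number of inputs in {0,1}^n (identified with subsets of {1..n})
  on which the program disagrees with OR_n.  Convention: the empty tree computes
  nothing and gets the worst possible fitness 2^n.\<close>
definition fit :: "nat \<Rightarrow> gp option \<Rightarrow> nat" where
  "fit n X = (case X of None \<Rightarrow> 2 ^ n
     | Some t \<Rightarrow> card {S \<in> Pow {1..n}. eval t S \<noteq> (S \<noteq> {})})"

text \<open>Apply f to the subtree rooted at the k-th node (preorder, 0 = root).\<close>
fun at_node :: "(gp \<Rightarrow> gp) \<Rightarrow> nat \<Rightarrow> gp \<Rightarrow> gp" where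
  "at_node f k (Leaf i) = (if k = 0 then f (Leaf i) else Leaf i)"
| "at_node f k (Node g a b) =
     (if k = 0 then f (Node g a b)
      else if k \<le> num_nodes a then Node g (at_node f (k - 1) a) b
      else Node g a (at_node f (k - 1 - num_nodes a) b))"

text \<open>Subtree deletion at a non-root node k (preorder): the parent of node k is
  replaced by the sibling of node k.\<close>
fun del_nr :: "nat \<Rightarrow> gp \<Rightarrow> gp" where
  "del_nr k (Leaf i) = Leaf i"
| "del_nr k (Node g a b) =
     (if k = 1 then b
      else if k = Suc (num_nodes a) then a
      else if k \<le> num_nodes a then Node g (del_nr (k - 1) a) b
      else Node g a (del_nr (k - 1 - num_nodes a) b))"

text \<open>Replace the j-th leaf (left to right, 0-based) by the literal l.\<close>
fun sub_leaf :: "nat \<Rightarrow> nat \<Rightarrow> gp \<Rightarrow> gp" where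
  "sub_leaf j l (Leaf i) = (if j = 0 then Leaf l else Leaf i)"
| "sub_leaf j l (Node g a b) =
     (if j < leaf_count a then Node g (sub_leaf j l a) b
      else Node g a (sub_leaf (j - leaf_count a) l b))"

definition hvl :: "nat \<Rightarrow> gp option \<Rightarrow> gp option pmf" where
  "hvl n X =
    bind_pmf (pmf_of_set {INS, DEL, SUB}) (\<lambda>op.
    bind_pmf (pmf_of_set {1..n}) (\<lambda>l.
    bind_pmf (pmf_of_set {AND, OR}) (\<lambda>g.
      (case X of
        None \<Rightarrow> return_pmf (Some (Leaf l))
      | Some t \<Rightarrow>
          (case op of
            INS \<Rightarrow> bind_pmf (pmf_of_set {..<num_nodes t}) (\<lambda>k.
                     map_pmf (\<lambda>b. Some (at_node
                         (\<lambda>s. if b then Node g s (Leaf l) else Node g (Leaf l) s) k t))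
                       (pmf_of_set (UNIV :: bool set)))
          | DEL \<Rightarrow> map_pmf (\<lambda>k. if k = 0 then None else Some (del_nr k t))
                     (pmf_of_set {..<num_nodes t})
          | SUB \<Rightarrow> map_pmf (\<lambda>j. Some (sub_leaf j l t))
                     (pmf_of_set {..<leaf_count t}))))))"

definition rls_step :: "nat \<Rightarrow> nat \<Rightarrow> gp option \<Rightarrow> gp option pmf" where
  "rls_step n ell X =
     map_pmf (\<lambda>X'. if LeafCount X' \<le> ell \<and> fit n X' \<le> fit n X then X' else X) (hvl n X)"

definition stopped_step :: "nat \<Rightarrow> nat \<Rightarrow> gp option \<Rightarrow> gp option pmf" where
  "stopped_step n ell X = (if fit n X = 0 then return_pmf X else rls_step n ell X)"

fun stopped_dist :: "nat \<Rightarrow> nat \<Rightarrow> nat \<Rightarrow> gp option pmf" where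
  "stopped_dist n ell 0 = return_pmf None"
| "stopped_dist n ell (Suc t) = bind_pmf (stopped_dist n ell t) (stopped_step n ell)"

text \<open>E[T] = sum over t of Pr[T > t], where T is the number of iterations before the
  optimum is found; T > t iff the stopped chain is not optimal at time t.\<close>
definition expected_time :: "nat \<Rightarrow> nat \<Rightarrow> ennreal" where
  "expected_time n ell =
     (\<Sum>t. ennreal (measure_pmf.prob (stopped_dist n ell t) {X. fit n X \<noteq> 0}))"

end

theory Submission
  imports Defs "HOL-Analysis.Harmonic_Numbers" "HOL-Library.Log_Nat"
begin

fun labels :: "gp \<Rightarrow> nat set" where
  "labels (Leaf i) = {i}"
| "labels (Node g a b) = labels a \<union> labels b"

fun TV :: "gp \<Rightarrow> nat set" where
  "TV (Leaf i) = {i}"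
| "TV (Node AND a b) = {}"
| "TV (Node OR a b) = TV a \<union> TV b"

lemma num_nodes_pos: "num_nodes t \<ge> 1"
  by (cases t) auto

lemma leaf_count_pos: "leaf_count t \<ge> 1"
  by (induction t) auto

lemma num_nodes_lc: "num_nodes t + 1 = 2 * leaf_count t"
  by (induction t) auto

lemma eval_empty: "\<not> eval t {}"
proof (induction t)
  case (Node g a b) then show ?case by (cases g) auto
qed auto

lemma eval_TV: "i \<in> TV t \<Longrightarrow> i \<in> S \<Longrightarrow> eval t S"
  by (induction t rule: TV.induct) auto

lemma TV_labels: "TV t \<subseteq> labels t"
  by (induction t rule: TV.induct) auto

lemma finite_TV: "finite (TV t)"
  by (induction t rule: TV.induct) auto

lemma at_node_0: "at_node f 0 t = f t"
  by (cases t) auto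

lemma lc_at_node:
  assumes "\<And>s. leaf_count (f s) = Suc (leaf_count s)"
  shows "u < num_nodes t \<Longrightarrow> leaf_count (at_node f u t) = Suc (leaf_count t)"
  by (induction t arbitrary: u) (auto simp: assms)

lemma labels_at_node:
  assumes "\<And>s. labels (f s) \<subseteq> labels s \<union> A"
  shows "labels (at_node f u t) \<subseteq> labels t \<union> A"
proof (induction t arbitrary: u)
  case (Leaf i) show ?case using assms[of "Leaf i"] by auto
next
  case (Node g a b) show ?case using Node.IH[of "u - 1"] Node.IH[of "u - 1 - num_nodes a"] assms[of "Node g a b"] by auto
qed

lemma lc_sub_leaf: "leaf_count (sub_leaf j l t) = leaf_count t"
  by (induction j l t rule: sub_leaf.induct) auto

lemma labels_sub_leaf: "labels (sub_leaf j l t) \<subseteq> labels t \<union> {l}"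
  by (induction j l t rule: sub_leaf.induct) auto

lemma lc_del_nr: "leaf_count (del_nr u t) \<le> leaf_count t"
  by (induction u t rule: del_nr.induct) auto

lemma labels_del_nr: "labels (del_nr u t) \<subseteq> labels t"
  by (induction u t rule: del_nr.induct) auto

definition Zs :: "nat \<Rightarrow> gp \<Rightarrow> nat set set" where
  "Zs n t = {S \<in> Pow {1..n}. S \<noteq> {} \<and> \<not> eval t S}"

lemma fit_Some: "fit n (Some t) = card (Zs n t)"
  unfolding fit_def Zs_def using eval_empty[of t]
  by (simp, intro arg_cong[where f=card]) auto

lemma fit_None: "fit n None = 2 ^ n"
  by (simp add: fit_def)

lemma Zs_sub: "Zs n t \<subseteq> Pow {1..n} - {{}}"
  by (auto simp: Zs_def)

lemma finite_Zs: "finite (Zs n t)"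
  by (rule finite_subset[OF Zs_sub]) auto

lemma fit_less: "fit n (Some t) < 2 ^ n"
proof -
  have "card (Zs n t) \<le> card (Pow {1..n} - {{}})"
    by (rule card_mono[OF _ Zs_sub]) auto
  also have "\<dots> = 2 ^ n - 1" by (simp add: card_Diff_singleton card_Pow)
  also have "\<dots> < 2 ^ n" by simp
  finally show ?thesis by (simp add: fit_Some)
qed

lemma fit_mono:
  assumes "\<And>S. eval t S \<Longrightarrow> eval t' S"
  shows "fit n (Some t') \<le> fit n (Some t)"
  unfolding fit_Some
  by (rule card_mono[OF finite_Zs]) (auto simp: Zs_def assms)

lemma Zs_OR1: "Zs n (Node OR t (Leaf i)) = {S \<in> Zs n t. i \<notin> S}"
  by (auto simp: Zs_def)

lemma Zs_OR2: "Zs n (Node OR (Leaf i) t) = {S \<in> Zs n t. i \<notin> S}"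
  by (auto simp: Zs_def)

lemma card_split_in:
  assumes "finite Z"
  shows "card {S \<in> Z. i \<notin> S} = card Z - card {S \<in> Z. i \<in> S}"
proof -
  have "Z = {S \<in> Z. i \<notin> S} \<union> {S \<in> Z. i \<in> S}" by auto
  hence "card Z = card {S \<in> Z. i \<notin> S} + card {S \<in> Z. i \<in> S}"
    using assms by (metis (no_types, lifting) card_Un_disjoint disjoint_iff finite_Un mem_Collect_eq)
  thus ?thesis by simp
qed


lemma sum_lessThan_add_split:
  fixes f :: "nat \<Rightarrow> 'a::comm_monoid_add"
  shows "(\<Sum>u<a+b. f u) = (\<Sum>u<a. f u) + (\<Sum>u<b. f (a + u))"
proof (induction b)
  case 0 show ?case by simp
next
  case (Suc b) show ?case using Suc by (simp add: add.assoc)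
qed

lemma finite_sub_Pow: "(Z::nat set set) \<subseteq> Pow {1..n} \<Longrightarrow> finite Z"
  by (erule finite_subset) simp

lemma sum_card_in:
  fixes n :: nat and Z :: "nat set set"
  assumes "Z \<subseteq> Pow {1..n}"
  shows "(\<Sum>i\<in>{1..n}. card {S\<in>Z. i \<in> S}) = (\<Sum>S\<in>Z. card S)"
proof -
  have fZ: "finite Z" using assms by (rule finite_sub_Pow)
  have "(\<Sum>i\<in>{1..n}. card {S\<in>Z. i \<in> S}) = (\<Sum>i\<in>{1..n}. \<Sum>S\<in>Z. if i \<in> S then 1 else 0)"
    using fZ by (intro sum.cong refl) (simp add: sum.inter_filter[symmetric])
  also have "\<dots> = (\<Sum>S\<in>Z. \<Sum>i\<in>{1..n}. if i \<in> S then 1 else 0)"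
    by (rule sum.swap)
  also have "\<dots> = (\<Sum>S\<in>Z. card S)"
  proof (intro sum.cong refl)
    fix S assume "S \<in> Z"
    hence "S \<subseteq> {1..n}" using assms by auto
    hence eq: "{i \<in> {1..n}. i \<in> S} = S" by auto
    have "(\<Sum>i\<in>{1..n}. if i \<in> S then 1 else 0) = (\<Sum>i\<in>{i\<in>{1..n}. i \<in> S}. (1::nat))"
      by (rule sum.inter_filter[symmetric]) simp
    also have "\<dots> = card S" by (simp only: eq) simp
    finally show "(\<Sum>i\<in>{1..n}. if i \<in> S then 1 else 0) = card S" .
  qed
  finally show ?thesis .
qed

lemma sum_card_ge:
  fixes n :: nat and Z :: "nat set set"
  assumes "Z \<subseteq> Pow {1..n} - {{}}"
  shows "card Z \<le> (\<Sum>S\<in>Z. card S)"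
proof -
  have fZ: "finite Z" using assms by (intro finite_sub_Pow) auto
  have "card Z = (\<Sum>S\<in>Z. 1)" by simp
  also have "\<dots> \<le> (\<Sum>S\<in>Z. card S)"
  proof (intro sum_mono)
    fix S assume S: "S \<in> Z"
    hence "S \<noteq> {}" "S \<subseteq> {1..n}" using assms by auto
    hence "S \<noteq> {}" "finite S" by (auto intro: finite_subset)
    thus "1 \<le> card S" by (simp add: Suc_leI card_gt_0_iff)
  qed
  finally show ?thesis .
qed

lemma card_small_sets:
  fixes n :: nat and Z :: "nat set set"
  assumes "n \<ge> 2"
  shows "card {S\<in>Pow {1..n}. card S < s} \<le> n ^ s"
proof (induction s)
  case 0 then show ?case by simp
next
  case (Suc s)
  have eq: "{S\<in>Pow {1..n}. card S < Suc s} = {S\<in>Pow {1..n}. card S < s} \<union> {B. B \<subseteq> {1..n} \<and> card B = s}"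
    by auto
  have "card {S\<in>Pow {1..n}. card S < Suc s} = card ({S\<in>Pow {1..n}. card S < s} \<union> {B. B \<subseteq> {1..n} \<and> card B = s})"
    by (simp only: eq)
  also have "\<dots> \<le> card {S\<in>Pow {1..n}. card S < s} + card {B. B \<subseteq> {1..n} \<and> card B = s}"
    by (rule card_Un_le)
  also have "card {B. B \<subseteq> {1..n} \<and> card B = s} = n choose s"
    using n_subsets[of "{1..n}" s] by simp
  also have "n choose s \<le> n ^ s"
    by (cases "s \<le> n") (auto simp: binomial_le_pow binomial_eq_0)
  finally have "card {S\<in>Pow {1..n}. card S < Suc s} \<le> n ^ s + n ^ s" using Suc by linarith
  also have "\<dots> = 2 * n ^ s" by simp
  also have "\<dots> \<le> n * n ^ s" by (rule mult_right_mono[OF assms]) simp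
  also have "\<dots> = n ^ Suc s" by simp
  finally show ?case .
qed

lemma sum_card_ge2:
  fixes n :: nat and Z :: "nat set set"
  assumes "Z \<subseteq> Pow {1..n}" "n \<ge> 2"
  shows "real s * (real (card Z) - real n ^ s) \<le> real (\<Sum>S\<in>Z. card S)"
proof -
  have fZ: "finite Z" using assms(1) by (rule finite_sub_Pow)
  let ?B = "{S\<in>Z. s \<le> card S}"
  let ?C = "{S\<in>Pow {1..n}. card S < s}"
  have sub: "Z \<subseteq> ?B \<union> ?C" using assms by auto
  have fin: "finite (?B \<union> ?C)" using fZ by auto
  have "card Z \<le> card (?B \<union> ?C)" by (rule card_mono[OF fin sub])
  also have "\<dots> \<le> card ?B + card ?C" by (rule card_Un_le)
  finally have "card Z \<le> card ?B + card ?C" .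
  moreover have "card ?C \<le> n ^ s" by (rule card_small_sets[OF assms(2)])
  ultimately have "card Z \<le> card ?B + n ^ s" by linarith
  hence "real (card Z) \<le> real (card ?B) + real n ^ s"
    by (metis of_nat_add of_nat_le_iff of_nat_power)
  hence "real (card Z) - real n ^ s \<le> real (card ?B)" by linarith
  hence "real s * (real (card Z) - real n ^ s) \<le> real s * real (card ?B)"
    by (simp add: mult_left_mono)
  also have "real s * real (card ?B) = real (\<Sum>S\<in>?B. s)" by simp
  also have "(\<Sum>S\<in>?B. s) \<le> (\<Sum>S\<in>?B. card S)" by (intro sum_mono) auto
  also have "\<dots> \<le> (\<Sum>S\<in>Z. card S)" using fZ by (intro sum_mono2) auto
  finally show ?thesis by simp
qed


definition good :: "nat set \<Rightarrow> gp \<Rightarrow> nat \<Rightarrow> bool" where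
  "good C t u \<longleftrightarrow> (\<forall>S. S \<inter> C = {} \<longrightarrow> eval t S \<longrightarrow> eval (del_nr u t) S)"

definition dterm :: "nat set \<Rightarrow> gp \<Rightarrow> nat \<Rightarrow> real" where
  "dterm C t u = (if u \<noteq> 0 \<and> good C t u then real (leaf_count t) - real (leaf_count (del_nr u t)) else 0)"

definition Dsum :: "nat set \<Rightarrow> gp \<Rightarrow> real" where
  "Dsum C t = (\<Sum>u<num_nodes t. dterm C t u)"

lemma dterm_nonneg: "dterm C t u \<ge> 0"
  using lc_del_nr[of u t] by (simp add: dterm_def)

lemma dterm_0: "dterm C t 0 = 0"
  by (simp add: dterm_def)

lemma Dsum_Node:
  "Dsum C (Node g a b) = (\<Sum>u<num_nodes a. dterm C (Node g a b) (Suc u))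
      + (\<Sum>u<num_nodes b. dterm C (Node g a b) (Suc (num_nodes a + u)))"
proof -
  have "Dsum C (Node g a b) = (\<Sum>u<Suc (num_nodes a + num_nodes b). dterm C (Node g a b) u)"
    by (simp add: Dsum_def)
  also have "\<dots> = dterm C (Node g a b) 0 + (\<Sum>u<num_nodes a + num_nodes b. dterm C (Node g a b) (Suc u))"
    by (rule sum.lessThan_Suc_shift)
  also have "\<dots> = (\<Sum>u<num_nodes a + num_nodes b. dterm C (Node g a b) (Suc u))"
    by (simp add: dterm_0)
  also have "\<dots> = (\<Sum>u<num_nodes a. dterm C (Node g a b) (Suc u))
      + (\<Sum>u<num_nodes b. dterm C (Node g a b) (Suc (num_nodes a + u)))"
    by (rule sum_lessThan_add_split)
  finally show ?thesis .
qed

lemma del_nr_1: "del_nr 1 (Node g a b) = b"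
  by simp

lemma del_nr_a: "del_nr (Suc (num_nodes a)) (Node g a b) = a"
  using num_nodes_pos[of a] by simp

lemma del_nr_in_a: "0 < u \<Longrightarrow> u < num_nodes a \<Longrightarrow> del_nr (Suc u) (Node g a b) = Node g (del_nr u a) b"
  by simp

lemma del_nr_in_b: "0 < u \<Longrightarrow> del_nr (Suc (num_nodes a + u)) (Node g a b) = Node g a (del_nr u b)"
  using num_nodes_pos[of a] by simp

lemma D_bound:
  "real (leaf_count t) - real (card (TV t - C)) \<le> Dsum C t + (if (\<exists>i. t = Leaf i \<and> i \<in> C) then 1 else 0)"
proof (induction t arbitrary: C)
  case (Leaf i)
  show ?case
  proof (cases "i \<in> C")
    case False hence "{i} - C = {i}" by auto
    thus ?thesis using False by (simp add: Dsum_def dterm_0)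
  qed (simp add: Dsum_def dterm_0)
next
  case (Node g a b)
  show ?case
  proof (cases g)
    case AND
    have "dterm C (Node g a b) 1 = real (leaf_count a)"
      using AND by (simp add: dterm_def good_def)
    moreover have "dterm C (Node g a b) (Suc (num_nodes a)) = real (leaf_count b)"
      using AND num_nodes_pos[of a] by (simp add: dterm_def good_def)
    moreover have "dterm C (Node g a b) 1 \<le> (\<Sum>u<num_nodes a. dterm C (Node g a b) (Suc u))"
      using member_le_sum[of 0 "{..<num_nodes a}" "\<lambda>u. dterm C (Node g a b) (Suc u)"] num_nodes_pos[of a] dterm_nonneg
      by auto
    moreover have "dterm C (Node g a b) (Suc (num_nodes a)) \<le> (\<Sum>u<num_nodes b. dterm C (Node g a b) (Suc (num_nodes a + u)))"
      using member_le_sum[of 0 "{..<num_nodes b}" "\<lambda>u. dterm C (Node g a b) (Suc (num_nodes a + u))"] num_nodes_pos[of b] dterm_nonneg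
      by auto
    ultimately show ?thesis by (simp add: Dsum_Node)
  next
    case OR
    define Ca where "Ca = C \<union> TV b"
    define Cb where "Cb = C \<union> TV a"
    define Xa where "Xa = (if (\<exists>i. a = Leaf i \<and> i \<in> Ca) then 1 else (0::real))"
    define Xb where "Xb = (if (\<exists>i. b = Leaf i \<and> i \<in> Cb) then 1 else (0::real))"
    have A: "(if u = 0 then Xa else 0) + dterm Ca a u \<le> dterm C (Node g a b) (Suc u)"
      if "u < num_nodes a" for u
    proof (cases "u = 0")
      case True
      show ?thesis
      proof (cases "\<exists>i. a = Leaf i \<and> i \<in> Ca")
        case True
        then obtain i where i: "a = Leaf i" "i \<in> Ca" by auto
        have "good C (Node g a b) 1"
          unfolding good_def using i OR eval_TV[of i b] by (auto simp: Ca_def)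
        thus ?thesis using \<open>u = 0\<close> True i by (simp add: Xa_def dterm_def dterm_0)
      next
        case False
        thus ?thesis using \<open>u = 0\<close> by (auto simp: Xa_def dterm_0 dterm_nonneg)
      qed
    next
      case False
      show ?thesis
      proof (cases "good Ca a u")
        case True
        have "good C (Node g a b) (Suc u)"
          unfolding good_def
        proof (intro allI impI)
          fix S assume S: "S \<inter> C = {}" "eval (Node g a b) S"
          show "eval (del_nr (Suc u) (Node g a b)) S"
          proof (cases "eval b S")
            case True thus ?thesis using del_nr_in_a[OF _ that] False OR by simp
          next
            case nb: False
            hence "S \<inter> TV b = {}" using eval_TV[of _ b S] by auto
            hence "S \<inter> Ca = {}" using S by (auto simp: Ca_def)
            moreover have "eval a S" using S nb OR by simp
            ultimately have "eval (del_nr u a) S" using True by (auto simp: good_def)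
            thus ?thesis using del_nr_in_a[OF _ that] False OR by simp
          qed
        qed
        thus ?thesis using False True del_nr_in_a[OF _ that] by (simp add: dterm_def)
      next
        case False
        hence "dterm Ca a u = 0" by (simp add: dterm_def)
        thus ?thesis using \<open>u \<noteq> 0\<close> dterm_nonneg[of C "Node g a b" "Suc u"] by simp
      qed
    qed
    have B: "(if u = 0 then Xb else 0) + dterm Cb b u \<le> dterm C (Node g a b) (Suc (num_nodes a + u))"
      if "u < num_nodes b" for u
    proof (cases "u = 0")
      case True
      show ?thesis
      proof (cases "\<exists>i. b = Leaf i \<and> i \<in> Cb")
        case True
        then obtain i where i: "b = Leaf i" "i \<in> Cb" by auto
        have "good C (Node g a b) (Suc (num_nodes a))"
          unfolding good_def using i OR eval_TV[of i a] del_nr_a[of a g b] by (auto simp: Cb_def)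
        thus ?thesis using \<open>u = 0\<close> True i del_nr_a[of a g b] by (simp add: Xb_def dterm_def dterm_0)
      next
        case False
        thus ?thesis using \<open>u = 0\<close> by (auto simp: Xb_def dterm_0 dterm_nonneg)
      qed
    next
      case False
      show ?thesis
      proof (cases "good Cb b u")
        case True
        have "good C (Node g a b) (Suc (num_nodes a + u))"
          unfolding good_def
        proof (intro allI impI)
          fix S assume S: "S \<inter> C = {}" "eval (Node g a b) S"
          show "eval (del_nr (Suc (num_nodes a + u)) (Node g a b)) S"
          proof (cases "eval a S")
            case True thus ?thesis using del_nr_in_b False OR by simp
          next
            case na: False
            hence "S \<inter> TV a = {}" using eval_TV[of _ a S] by auto
            hence "S \<inter> Cb = {}" using S by (auto simp: Cb_def)
            moreover have "eval b S" using S na OR by simp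
            ultimately have "eval (del_nr u b) S" using True by (auto simp: good_def)
            thus ?thesis using del_nr_in_b False OR by simp
          qed
        qed
        thus ?thesis using False True del_nr_in_b[of u a g b] by (simp add: dterm_def)
      next
        case False
        hence "dterm Cb b u = 0" by (simp add: dterm_def)
        thus ?thesis using \<open>u \<noteq> 0\<close> dterm_nonneg[of C "Node g a b" "Suc (num_nodes a + u)"] by simp
      qed
    qed
    have SA: "Xa + Dsum Ca a \<le> (\<Sum>u<num_nodes a. dterm C (Node g a b) (Suc u))"
    proof -
      have "Xa + Dsum Ca a = (\<Sum>u<num_nodes a. (if u = 0 then Xa else 0) + dterm Ca a u)"
        using num_nodes_pos[of a] by (simp add: Dsum_def sum.distrib)
      also have "\<dots> \<le> (\<Sum>u<num_nodes a. dterm C (Node g a b) (Suc u))"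
        by (intro sum_mono A) auto
      finally show ?thesis .
    qed
    have SB: "Xb + Dsum Cb b \<le> (\<Sum>u<num_nodes b. dterm C (Node g a b) (Suc (num_nodes a + u)))"
    proof -
      have "Xb + Dsum Cb b = (\<Sum>u<num_nodes b. (if u = 0 then Xb else 0) + dterm Cb b u)"
        using num_nodes_pos[of b] by (simp add: Dsum_def sum.distrib)
      also have "\<dots> \<le> (\<Sum>u<num_nodes b. dterm C (Node g a b) (Suc (num_nodes a + u)))"
        by (intro sum_mono B) auto
      finally show ?thesis .
    qed
    have IHa: "real (leaf_count a) - real (card (TV a - Ca)) \<le> Dsum Ca a + Xa"
      using Node.IH(1)[of Ca] by (simp add: Xa_def)
    have IHb: "real (leaf_count b) - real (card (TV b - Cb)) \<le> Dsum Cb b + Xb"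
      using Node.IH(2)[of Cb] by (simp add: Xb_def)
    have "card (TV a - Ca) + card (TV b - Cb) = card ((TV a - Ca) \<union> (TV b - Cb))"
      by (rule card_Un_disjoint[symmetric]) (auto simp: Ca_def Cb_def finite_TV)
    also have "\<dots> \<le> card (TV (Node g a b) - C)"
      by (rule card_mono) (auto simp: OR Ca_def Cb_def finite_TV)
    finally have "real (card (TV a - Ca)) + real (card (TV b - Cb)) \<le> real (card (TV (Node g a b) - C))"
      by linarith
    thus ?thesis using IHa IHb SA SB by (simp add: Dsum_Node)
  qed
qed

lemma D_bound0: "real (leaf_count t) - real (card (TV t)) \<le> Dsum {} t"
  using D_bound[of t "{}"] by simp


definition Lg :: "nat \<Rightarrow> nat" where "Lg n = ceillog2 n"

definition sig :: "nat \<Rightarrow> nat \<Rightarrow> nat" where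
  "sig n j = (floorlog 2 j - 2) div Lg n"

definition w :: "nat \<Rightarrow> nat \<Rightarrow> real" where
  "w n j = 1 / (real j * real (sig n j + 1))"

definition phi :: "nat \<Rightarrow> nat \<Rightarrow> real" where
  "phi n F = (\<Sum>j\<in>{1..F}. w n j)"

lemma Lg_props: "n \<ge> 2 \<Longrightarrow> n \<le> 2 ^ Lg n \<and> Lg n \<ge> 1"
proof -
  assume n: "n \<ge> 2"
  have "n \<le> 2 ^ Lg n" unfolding Lg_def using ceillog2_le_iff[of n "ceillog2 n"] n by simp
  moreover have "\<not> ceillog2 n \<le> 0" using ceillog2_le_iff[of n 0] n by simp
  ultimately show ?thesis by (simp add: Lg_def)
qed

lemma w_nonneg: "w n j \<ge> 0"
  by (simp add: w_def)

lemma sig_mono: "j \<le> j' \<Longrightarrow> sig n j \<le> sig n j'"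
  unfolding sig_def by (intro div_le_mono diff_le_mono floorlog_mono)

lemma w_anti: "1 \<le> j \<Longrightarrow> j \<le> j' \<Longrightarrow> w n j' \<le> w n j"
proof -
  assume a: "1 \<le> j" "j \<le> j'"
  have "real j * real (sig n j + 1) \<le> real j' * real (sig n j' + 1)"
    using a sig_mono[OF a(2), of n] by (intro mult_mono) auto
  moreover have "0 < real j * real (sig n j + 1)" using a by simp
  ultimately show ?thesis unfolding w_def by (intro divide_left_mono) auto
qed

lemma phi_nonneg: "phi n F \<ge> 0"
  unfolding phi_def by (intro sum_nonneg w_nonneg)

lemma phi_mono: "F \<le> F' \<Longrightarrow> phi n F \<le> phi n F'"
  unfolding phi_def by (intro sum_mono2) (auto simp: w_nonneg)

lemma phi_diff:
  assumes "r \<le> F"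
  shows "real r * w n F \<le> phi n F - phi n (F - r)"
proof -
  have "{1..F} = {1..F - r} \<union> {F - r + 1..F}" by auto
  hence "phi n F = phi n (F - r) + (\<Sum>j\<in>{F - r + 1..F}. w n j)"
    unfolding phi_def by (subst sum.union_disjoint[symmetric]) auto
  moreover have "real r * w n F \<le> (\<Sum>j\<in>{F - r + 1..F}. w n j)"
  proof -
    have "(\<Sum>j\<in>{F - r + 1..F}. w n F) \<le> (\<Sum>j\<in>{F - r + 1..F}. w n j)"
      by (intro sum_mono w_anti) auto
    moreover have "card {F - r + 1..F} = r" using assms by simp
    ultimately show ?thesis by simp
  qed
  ultimately show ?thesis by simp
qed

lemma sig_big:
  assumes n: "n \<ge> 2" and F: "F \<ge> 1" and s: "sig n F \<ge> 1"
  shows "2 * n ^ sig n F \<le> F"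
proof -
  define q where "q = floorlog 2 F - 1"
  have q: "2 ^ q \<le> F" using floorlog_bounds[of F 2] F by (simp add: q_def)
  define L where "L = Lg n"
  have L: "n \<le> 2 ^ L" "L \<ge> 1" using Lg_props[OF n] by (auto simp: L_def)
  have "floorlog 2 F - 2 = q - 1" by (simp add: q_def)
  hence sq: "sig n F = (q - 1) div L" by (simp add: sig_def L_def)
  have Ls: "L * sig n F \<le> q - 1" unfolding sq by (simp add: div_times_less_eq_dividend mult.commute)
  have "L * sig n F \<ge> 1" using s L(2) by (metis mult_le_mono nat_mult_1)
  hence q2: "q \<ge> 2" using Ls by linarith
  have "n ^ sig n F \<le> (2 ^ L) ^ sig n F" by (rule power_mono[OF L(1)]) simp
  also have "\<dots> = 2 ^ (L * sig n F)" by (simp add: power_mult)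
  also have "\<dots> \<le> 2 ^ (q - 1)" by (rule power_increasing[OF Ls]) simp
  finally have "2 * n ^ sig n F \<le> 2 * 2 ^ (q - 1)" by simp
  also have "2 * 2 ^ (q - 1) = (2::nat) ^ q" using q2
    by (metis Suc_diff_1 less_le_trans pos2 power_Suc zero_less_numeral)
  finally show ?thesis using q by linarith
qed

lemma w_sum_bound:
  fixes T :: real
  assumes n: "n \<ge> 2" and F: "F \<ge> 1"
    and T1: "real F \<le> T" and T2: "real (sig n F) * (real F - real n ^ sig n F) \<le> T"
  shows "1 / 3 \<le> w n F * T"
proof -
  define s where "s = sig n F"
  have wF: "w n F = 1 / (real F * real (s + 1))" by (simp add: w_def s_def)
  have pos: "real F * real (s + 1) > 0" using F by simp
  have key: "real F * real (s + 1) / 3 \<le> T"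
  proof (cases "s = 0")
    case True thus ?thesis using T1 F by simp
  next
    case False
    hence "2 * n ^ s \<le> F" using sig_big[OF n F] by (simp add: s_def)
    hence "2 * real n ^ s \<le> real F" by (metis of_nat_le_iff of_nat_mult of_nat_numeral of_nat_power)
    hence "real s * (real F / 2) \<le> real s * (real F - real n ^ s)"
      by (intro mult_left_mono) auto
    hence T3: "real s * real F / 2 \<le> T" using T2 by (simp add: s_def)
    show ?thesis
    proof (cases "s = 1")
      case True thus ?thesis using T1 F by simp
    next
      case False
      hence "s \<ge> 2" using \<open>s \<noteq> 0\<close> by simp
      hence "real F * real (s + 1) / 3 \<le> real s * real F / 2"
        using F by (simp add: field_simps)
      thus ?thesis using T3 by linarith
    qed
  qed
  have "1 / 3 = (real F * real (s + 1) / 3) / (real F * real (s + 1))" using pos F by simp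
  also have "\<dots> \<le> T / (real F * real (s + 1))" using key pos by (intro divide_right_mono) auto
  also have "\<dots> = w n F * T" by (simp add: wF)
  finally show ?thesis .
qed


lemma sum_lessThan_add_split':
  fixes f :: "nat \<Rightarrow> 'a::comm_monoid_add"
  shows "(\<Sum>u<a+b. f u) = (\<Sum>u<a. f u) + (\<Sum>u<b. f (a + u))"
proof (induction b)
  case 0 show ?case by simp
next
  case (Suc b) show ?case using Suc by (simp add: add.assoc)
qed

lemma block_floorlog: "2 ^ q \<le> j \<Longrightarrow> j < 2 ^ Suc q \<Longrightarrow> floorlog 2 j = Suc q"
proof -
  assume a: "2 ^ q \<le> j" "j < 2 ^ Suc q"
  have "floorlog 2 j \<le> Suc q" using a(2) by (intro floorlog_leI) auto
  moreover have "Suc q \<le> floorlog 2 j" using a(1) by (intro floorlog_geI) auto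
  ultimately show ?thesis by simp
qed

lemma block_sum:
  "(\<Sum>j\<in>{2^q..<2^Suc q}. w n j) \<le> 1 / real ((q - 1) div Lg n + 1)"
proof -
  define c where "c = real ((q - 1) div Lg n + 1)"
  have c: "c \<ge> 1" by (simp add: c_def)
  have "(\<Sum>j\<in>{2^q..<2^Suc q}. w n j) \<le> (\<Sum>j\<in>{(2::nat)^q..<2^Suc q}. 1 / (2 ^ q * c))"
  proof (intro sum_mono)
    fix j assume j: "j \<in> {2^q..<(2::nat)^Suc q}"
    hence "sig n j = (q - 1) div Lg n" using block_floorlog[of q j]
      by (simp add: sig_def)
    hence wj: "w n j = 1 / (real j * c)" by (simp add: w_def c_def)
    have "(2::real) ^ q \<le> real j" using j by (metis atLeastLessThan_iff of_nat_le_iff of_nat_numeral of_nat_power)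
    hence "2 ^ q * c \<le> real j * c" using c by (intro mult_right_mono) auto
    moreover have "0 < real j" using j by (metis atLeastLessThan_iff le_less_trans less_numeral_extra(1) nat_zero_less_power_iff not_le not_less_zero of_nat_0_less_iff pos2 zero_less_power less_le_trans)
    ultimately show "w n j \<le> 1 / (2 ^ q * c)" unfolding wj using c
      by (intro divide_left_mono) auto
  qed
  also have "\<dots> = real (card {(2::nat)^q..<2^Suc q}) * (1 / (2 ^ q * c))" by simp
  also have "card {(2::nat)^q..<2^Suc q} = 2 ^ q" by simp
  also have "real ((2::nat) ^ q) * (1 / (2 ^ q * c)) = 1 / c" using c by simp
  finally show ?thesis by (simp add: c_def)
qed

lemma prefix_sum:
  "(\<Sum>j\<in>{1..<2^Q}. w n j) = (\<Sum>q<Q. \<Sum>j\<in>{2^q..<2^Suc q}. w n j)"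
proof (induction Q)
  case 0 show ?case by simp
next
  case (Suc Q)
  have "(\<Sum>j\<in>{1..<2^Suc Q}. w n j) = (\<Sum>j\<in>{1..<2^Q}. w n j) + (\<Sum>j\<in>{2^Q..<2^Suc Q}. w n j)"
    by (rule sum.atLeastLessThan_concat[symmetric]) auto
  thus ?case using Suc by simp
qed

lemma harm_block:
  assumes "L \<ge> 1"
  shows "(\<Sum>r<L*m. 1 / real (r div L + 1)) = real L * harm m"
proof (induction m)
  case 0 show ?case by (simp add: harm_def)
next
  case (Suc m)
  have "(\<Sum>r<L*Suc m. 1 / real (r div L + 1)) = (\<Sum>r<L*m + L. 1 / real (r div L + 1))"
    by (simp add: algebra_simps)
  also have "\<dots> = (\<Sum>r<L*m. 1 / real (r div L + 1)) + (\<Sum>r<L. 1 / real ((L*m + r) div L + 1))"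
    by (rule sum_lessThan_add_split')
  also have "(\<Sum>r<L. 1 / real ((L*m + r) div L + 1)) = (\<Sum>r<L. 1 / real (m + 1))"
    using assms by (intro sum.cong refl) auto
  also have "\<dots> = real L / real (Suc m)" by simp
  finally show ?case using Suc by (simp add: harm_Suc algebra_simps divide_inverse)
qed

lemma phi_bound:
  assumes n: "n \<ge> 2" and F: "F < 2 ^ n"
  shows "phi n F \<le> 1 + real (Lg n) * harm n"
proof -
  define L where "L = Lg n"
  have L: "L \<ge> 1" using Lg_props[OF n] by (simp add: L_def)
  define f where "f r = 1 / real (r div L + 1)" for r
  have "phi n F \<le> phi n (2^n - 1)" using F by (intro phi_mono) simp
  also have "phi n (2^n - 1) = (\<Sum>j\<in>{1..<2^n}. w n j)"
    unfolding phi_def by (intro sum.cong) auto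
  also have "\<dots> = (\<Sum>q<n. \<Sum>j\<in>{2^q..<2^Suc q}. w n j)" by (rule prefix_sum)
  also have "\<dots> \<le> (\<Sum>q<n. f (q - 1))"
    by (intro sum_mono order_trans[OF block_sum]) (simp add: f_def L_def)
  also have "(\<Sum>q<n. f (q - 1)) = f (0 - 1) + (\<Sum>q<n - 1. f q)"
  proof -
    obtain n' where n': "n = Suc n'" using n by (cases n) auto
    show ?thesis unfolding n' by (subst sum.lessThan_Suc_shift) simp
  qed
  also have "f (0 - 1) = 1" by (simp add: f_def)
  also have "(\<Sum>q<n - 1. f q) \<le> (\<Sum>q<L*n. f q)"
  proof (intro sum_mono2)
    have "n \<le> L * n" using mult_le_mono1[OF L, of n] by simp
    hence "n - 1 \<le> L * n" by linarith
    thus "{..<n - 1} \<subseteq> {..<L * n}" by (simp only: lessThan_subset_iff)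
  qed (auto simp: f_def)
  also have "(\<Sum>q<L*n. f q) = real L * harm n" unfolding f_def by (rule harm_block[OF L])
  finally show ?thesis by (simp add: L_def)
qed

lemma harm_le_ln: "n \<ge> 1 \<Longrightarrow> harm n \<le> ln (real n) + 1"
  using euler_mascheroni_sequence_decreasing[of 1 n] by (simp add: harm_def)


lemma exp_bind_set:
  fixes h :: "'b \<Rightarrow> real"
  assumes A: "finite A" "A \<noteq> {}" and fin: "\<And>a. a \<in> A \<Longrightarrow> finite (set_pmf (f a))"
  shows "measure_pmf.expectation (bind_pmf (pmf_of_set A) f) h
           = (\<Sum>a\<in>A. measure_pmf.expectation (f a) h) / real (card A)"
proof -
  define B where "B = (\<Union>a\<in>A. set_pmf (f a))"
  have fB: "finite B" using A fin by (simp add: B_def)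
  have "measure_pmf.expectation (bind_pmf (pmf_of_set A) f) h
        = (\<Sum>y\<in>B. h y * pmf (bind_pmf (pmf_of_set A) f) y)"
    by (rule integral_measure_pmf_real[OF fB]) (use A in \<open>auto simp: B_def set_bind_pmf\<close>)
  also have "\<dots> = (\<Sum>y\<in>B. \<Sum>a\<in>A. h y * pmf (f a) y / real (card A))"
    using A by (simp add: pmf_bind_pmf_of_set sum_distrib_left sum_divide_distrib)
  also have "\<dots> = (\<Sum>a\<in>A. \<Sum>y\<in>B. h y * pmf (f a) y / real (card A))"
    by (rule sum.swap)
  also have "\<dots> = (\<Sum>a\<in>A. measure_pmf.expectation (f a) h / real (card A))"
  proof (intro sum.cong refl)
    fix a assume a: "a \<in> A"
    have "measure_pmf.expectation (f a) h = (\<Sum>y\<in>B. h y * pmf (f a) y)"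
      by (rule integral_measure_pmf_real[OF fB]) (use a in \<open>auto simp: B_def\<close>)
    thus "(\<Sum>y\<in>B. h y * pmf (f a) y / real (card A)) = measure_pmf.expectation (f a) h / real (card A)"
      by (simp add: sum_divide_distrib)
  qed
  also have "\<dots> = (\<Sum>a\<in>A. measure_pmf.expectation (f a) h) / real (card A)"
    by (simp add: sum_divide_distrib)
  finally show ?thesis .
qed

lemma exp_pmf_of_set:
  "finite A \<Longrightarrow> A \<noteq> {} \<Longrightarrow> measure_pmf.expectation (pmf_of_set A) (h::_\<Rightarrow>real) = (\<Sum>a\<in>A. h a) / real (card A)"
  by (rule integral_pmf_of_set)

definition INSr :: "gp \<Rightarrow> nat \<Rightarrow> fn \<Rightarrow> nat \<Rightarrow> bool \<Rightarrow> gp option" where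
  "INSr t l g u b = Some (at_node (\<lambda>s. if b then Node g s (Leaf l) else Node g (Leaf l) s) u t)"

definition DELr :: "gp \<Rightarrow> nat \<Rightarrow> gp option" where
  "DELr t u = (if u = 0 then None else Some (del_nr u t))"

definition SUBr :: "gp \<Rightarrow> nat \<Rightarrow> nat \<Rightarrow> gp option" where
  "SUBr t l j = Some (sub_leaf j l t)"

definition innerp :: "gp \<Rightarrow> hvl_op \<Rightarrow> nat \<Rightarrow> fn \<Rightarrow> gp option pmf" where
  "innerp t op l g = (case op of
            INS \<Rightarrow> bind_pmf (pmf_of_set {..<num_nodes t}) (\<lambda>k.
                     map_pmf (\<lambda>b. Some (at_node
                         (\<lambda>s. if b then Node g s (Leaf l) else Node g (Leaf l) s) k t))
                       (pmf_of_set (UNIV :: bool set)))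
          | DEL \<Rightarrow> map_pmf (\<lambda>k. if k = 0 then None else Some (del_nr k t))
                     (pmf_of_set {..<num_nodes t})
          | SUB \<Rightarrow> map_pmf (\<lambda>j. Some (sub_leaf j l t))
                     (pmf_of_set {..<leaf_count t}))"

lemma hvl_Some: "hvl n (Some t) =
    bind_pmf (pmf_of_set {INS, DEL, SUB}) (\<lambda>op.
    bind_pmf (pmf_of_set {1..n}) (\<lambda>l.
    bind_pmf (pmf_of_set {AND, OR}) (\<lambda>g. innerp t op l g)))"
  unfolding hvl_def innerp_def by simp

lemma neN: "{..<num_nodes t} \<noteq> {}"
proof -
  have "0 \<in> {..<num_nodes t}" using num_nodes_pos[of t] by simp
  thus ?thesis by blast
qed
lemma neK: "{..<leaf_count t} \<noteq> {}"
proof -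
  have "0 \<in> {..<leaf_count t}" using leaf_count_pos[of t] by simp
  thus ?thesis by blast
qed

lemma finite_inner: "finite (set_pmf (innerp t op l g))"
  using neN[of t] neK[of t]
  by (cases op) (auto simp: innerp_def set_bind_pmf)

lemma exp_inner_INS:
  "measure_pmf.expectation (innerp t INS l g) h
     = (\<Sum>u<num_nodes t. (h (INSr t l g u True) + h (INSr t l g u False)) / 2) / real (num_nodes t)"
proof -
  have "measure_pmf.expectation (innerp t INS l g) h
     = (\<Sum>u<num_nodes t. measure_pmf.expectation (map_pmf (\<lambda>b. Some (at_node
                         (\<lambda>s. if b then Node g s (Leaf l) else Node g (Leaf l) s) u t))
                       (pmf_of_set (UNIV :: bool set))) h) / real (num_nodes t)"
    unfolding innerp_def hvl_op.case
    by (rule trans[OF exp_bind_set]) (auto simp: neN)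
  also have "\<dots> = (\<Sum>u<num_nodes t. (h (INSr t l g u True) + h (INSr t l g u False)) / 2) / real (num_nodes t)"
    by (simp add: integral_pmf_of_set INSr_def UNIV_bool add.commute)
  finally show ?thesis .
qed

lemma exp_inner_DEL:
  "measure_pmf.expectation (innerp t DEL l g) h
     = (\<Sum>u<num_nodes t. h (DELr t u)) / real (num_nodes t)"
  unfolding innerp_def DELr_def using neN[of t]
  by (simp add: integral_pmf_of_set)

lemma exp_inner_SUB:
  "measure_pmf.expectation (innerp t SUB l g) h
     = (\<Sum>j<leaf_count t. h (SUBr t l j)) / real (leaf_count t)"
  unfolding innerp_def SUBr_def using neK[of t]
  by (simp add: integral_pmf_of_set)

lemma exp_hvl:
  assumes n: "n \<ge> 1"
  shows "measure_pmf.expectation (hvl n (Some t)) h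
     = (\<Sum>op\<in>{INS, DEL, SUB}. (\<Sum>l\<in>{1..n}. \<Sum>g\<in>{AND, OR}.
           measure_pmf.expectation (innerp t op l g) h) / real n / 2) / 3"
proof -
  have fin1: "finite (set_pmf (bind_pmf (pmf_of_set {AND, OR}) (\<lambda>g. innerp t op l g)))" for op l
    by (auto simp: set_bind_pmf finite_inner)
  have fin2: "finite (set_pmf (bind_pmf (pmf_of_set {1..n}) (\<lambda>l. bind_pmf (pmf_of_set {AND, OR}) (\<lambda>g. innerp t op l g))))" for op
    using n by (auto simp: set_bind_pmf finite_inner)
  have e1: "measure_pmf.expectation (bind_pmf (pmf_of_set {AND, OR}) (\<lambda>g. innerp t op l g)) h
      = (\<Sum>g\<in>{AND, OR}. measure_pmf.expectation (innerp t op l g) h) / 2" for op l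
    by (subst exp_bind_set) (auto simp: finite_inner)
  have e2: "measure_pmf.expectation (bind_pmf (pmf_of_set {1..n}) (\<lambda>l. bind_pmf (pmf_of_set {AND, OR}) (\<lambda>g. innerp t op l g))) h
      = (\<Sum>l\<in>{1..n}. \<Sum>g\<in>{AND, OR}. measure_pmf.expectation (innerp t op l g) h) / real n / 2" for op
    using n by (subst exp_bind_set) (auto simp: fin1 e1 sum_divide_distrib mult.commute finite_inner)
  have "measure_pmf.expectation (hvl n (Some t)) h = (\<Sum>op\<in>{INS, DEL, SUB}. measure_pmf.expectation (bind_pmf (pmf_of_set {1..n}) (\<lambda>l. bind_pmf (pmf_of_set {AND, OR}) (\<lambda>g. innerp t op l g))) h) / real (card {INS, DEL, SUB})"
    unfolding hvl_Some by (rule exp_bind_set) (simp_all only: fin2, auto)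
  also have "\<dots> = (\<Sum>op\<in>{INS, DEL, SUB}. (\<Sum>l\<in>{1..n}. \<Sum>g\<in>{AND, OR}. measure_pmf.expectation (innerp t op l g) h) / real n / 2) / 3"
    by (simp only: e2) simp
  finally show ?thesis .
qed


definition accf :: "nat \<Rightarrow> nat \<Rightarrow> gp option \<Rightarrow> gp option \<Rightarrow> gp option" where
  "accf n ell X Y = (if LeafCount Y \<le> ell \<and> fit n Y \<le> fit n X then Y else X)"

lemma rls_step_accf: "rls_step n ell X = map_pmf (accf n ell X) (hvl n X)"
  unfolding rls_step_def accf_def[abs_def] by (rule refl)

definition lam :: "nat \<Rightarrow> nat \<Rightarrow> real" where
  "lam n ell = 6 * real ell / real (ell - n)"

definition MM :: "nat \<Rightarrow> nat \<Rightarrow> real" where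
  "MM n ell = 12 * real n * real ell * (3 + lam n ell)"

definition Bnd :: "nat \<Rightarrow> nat \<Rightarrow> real" where
  "Bnd n ell = MM n ell * (1 + real (Lg n) * harm n) + lam n ell * real ell"

definition Phi :: "nat \<Rightarrow> nat \<Rightarrow> gp option \<Rightarrow> real" where
  "Phi n ell X = (case X of None \<Rightarrow> Bnd n ell + 1
      | Some t \<Rightarrow> MM n ell * phi n (fit n (Some t)) + lam n ell * real (leaf_count t))"

lemma lam_nonneg: "lam n ell \<ge> 0" by (simp add: lam_def)
lemma MM_nonneg: "MM n ell \<ge> 0" using lam_nonneg[of n ell] by (simp add: MM_def)

definition hh :: "nat \<Rightarrow> nat \<Rightarrow> gp \<Rightarrow> gp option \<Rightarrow> real" where
  "hh n ell t Y = Phi n ell (Some t) - Phi n ell (accf n ell (Some t) Y)"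

lemma hh_cases:
  "hh n ell t Y = 0 \<or> (\<exists>t'. Y = Some t' \<and> leaf_count t' \<le> ell \<and> fit n Y \<le> fit n (Some t) \<and>
      hh n ell t Y = MM n ell * (phi n (fit n (Some t)) - phi n (fit n Y))
                     + lam n ell * (real (leaf_count t) - real (leaf_count t')))"
proof (cases "LeafCount Y \<le> ell \<and> fit n Y \<le> fit n (Some t)")
  case True
  then obtain t' where t': "Y = Some t'"
    using fit_less[of n t] by (cases Y) (auto simp: fit_None)
  show ?thesis using True t'
    by (simp add: hh_def accf_def Phi_def LeafCount_def algebra_simps)
next
  case False thus ?thesis by (auto simp: hh_def accf_def)
qed

lemma hh_lb:
  assumes "LeafCount Y \<le> Suc (leaf_count t)"
  shows "hh n ell t Y \<ge> - lam n ell"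
proof -
  from hh_cases[of n ell t Y] show ?thesis
  proof
    assume "hh n ell t Y = 0" thus ?thesis using lam_nonneg[of n ell] by simp
  next
    assume "\<exists>t'. Y = Some t' \<and> leaf_count t' \<le> ell \<and> fit n Y \<le> fit n (Some t) \<and>
      hh n ell t Y = MM n ell * (phi n (fit n (Some t)) - phi n (fit n Y))
                     + lam n ell * (real (leaf_count t) - real (leaf_count t'))"
    then obtain t' where t': "Y = Some t'" "fit n Y \<le> fit n (Some t)"
      "hh n ell t Y = MM n ell * (phi n (fit n (Some t)) - phi n (fit n Y))
                     + lam n ell * (real (leaf_count t) - real (leaf_count t'))" by blast
    have "MM n ell * (phi n (fit n (Some t)) - phi n (fit n Y)) \<ge> 0"
      using MM_nonneg phi_mono[OF t'(2)] by simp
    moreover have "lam n ell * (real (leaf_count t) - real (leaf_count t')) \<ge> lam n ell * (-1)"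
    proof (rule mult_left_mono)
      show "-1 \<le> real (leaf_count t) - real (leaf_count t')"
        using assms t'(1) by (simp add: LeafCount_def)
    qed (rule lam_nonneg)
    ultimately show ?thesis using t'(3) by linarith
  qed
qed

lemma hh_lb0:
  assumes "LeafCount Y \<le> leaf_count t"
  shows "hh n ell t Y \<ge> 0"
proof -
  from hh_cases[of n ell t Y] show ?thesis
  proof
    assume "hh n ell t Y = 0" thus ?thesis by simp
  next
    assume "\<exists>t'. Y = Some t' \<and> leaf_count t' \<le> ell \<and> fit n Y \<le> fit n (Some t) \<and>
      hh n ell t Y = MM n ell * (phi n (fit n (Some t)) - phi n (fit n Y))
                     + lam n ell * (real (leaf_count t) - real (leaf_count t'))"
    then obtain t' where t': "Y = Some t'" "fit n Y \<le> fit n (Some t)"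
      "hh n ell t Y = MM n ell * (phi n (fit n (Some t)) - phi n (fit n Y))
                     + lam n ell * (real (leaf_count t) - real (leaf_count t'))" by blast
    have "MM n ell * (phi n (fit n (Some t)) - phi n (fit n Y)) \<ge> 0"
      using MM_nonneg phi_mono[OF t'(2)] by simp
    moreover have "lam n ell * (real (leaf_count t) - real (leaf_count t')) \<ge> 0"
      using assms t'(1) lam_nonneg[of n ell] by (simp add: LeafCount_def)
    ultimately show ?thesis using t'(3) by linarith
  qed
qed

lemma hh_acc:
  assumes "leaf_count t' \<le> ell" "fit n (Some t') \<le> fit n (Some t)"
  shows "hh n ell t (Some t') = MM n ell * (phi n (fit n (Some t)) - phi n (fit n (Some t')))
                     + lam n ell * (real (leaf_count t) - real (leaf_count t'))"
  using assms by (simp add: hh_def accf_def Phi_def LeafCount_def algebra_simps)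

lemma hh_rej:
  assumes "\<not> leaf_count t' \<le> ell"
  shows "hh n ell t (Some t') = 0"
  using assms by (simp add: hh_def accf_def LeafCount_def)


definition rr :: "nat \<Rightarrow> gp \<Rightarrow> nat \<Rightarrow> nat" where
  "rr n t l = card {S \<in> Zs n t. l \<in> S}"

lemma INS_lb:
  assumes "u < num_nodes t"
  shows "hh n ell t (INSr t l g u b) \<ge> - lam n ell"
proof (rule hh_lb)
  have "leaf_count (at_node (\<lambda>s. if b then Node g s (Leaf l) else Node g (Leaf l) s) u t) = Suc (leaf_count t)"
    by (rule lc_at_node[OF _ assms]) simp
  thus "LeafCount (INSr t l g u b) \<le> Suc (leaf_count t)" by (simp add: INSr_def LeafCount_def)
qed

lemma INS_full:
  assumes "u < num_nodes t" "leaf_count t = ell"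
  shows "hh n ell t (INSr t l g u b) = 0"
proof -
  have "leaf_count (at_node (\<lambda>s. if b then Node g s (Leaf l) else Node g (Leaf l) s) u t) = Suc (leaf_count t)"
    by (rule lc_at_node[OF _ assms(1)]) simp
  thus ?thesis unfolding INSr_def using assms(2) by (intro hh_rej) simp
qed

lemma INS_root:
  assumes "leaf_count t < ell"
  shows "hh n ell t (INSr t l OR 0 b) = MM n ell * (phi n (fit n (Some t)) - phi n (fit n (Some t) - rr n t l)) - lam n ell"
proof -
  define t' where "t' = (if b then Node OR t (Leaf l) else Node OR (Leaf l) t)"
  have eq: "INSr t l OR 0 b = Some t'" by (simp add: INSr_def at_node_0 t'_def)
  have lc: "leaf_count t' = Suc (leaf_count t)" by (simp add: t'_def)
  have "Zs n t' = {S \<in> Zs n t. l \<notin> S}" by (simp add: t'_def Zs_OR1 Zs_OR2)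
  hence ft: "fit n (Some t') = fit n (Some t) - rr n t l"
    by (simp add: fit_Some rr_def card_split_in finite_Zs)
  have "hh n ell t (Some t') = MM n ell * (phi n (fit n (Some t)) - phi n (fit n (Some t')))
                     + lam n ell * (real (leaf_count t) - real (leaf_count t'))"
    by (rule hh_acc) (use assms lc ft in auto)
  thus ?thesis unfolding eq using lc ft by (simp add: algebra_simps)
qed

lemma DEL_lb:
  assumes "leaf_count t \<le> ell"
  shows "hh n ell t (DELr t u) \<ge> lam n ell * dterm {} t u"
proof (cases "u = 0")
  case True
  have "hh n ell t None = 0"
    using fit_less[of n t] by (simp add: hh_def accf_def fit_None)
  thus ?thesis using True by (simp add: DELr_def dterm_0)
next
  case False
  show ?thesis
  proof (cases "good {} t u")
    case True
    have g: "\<And>S. eval t S \<Longrightarrow> eval (del_nr u t) S" using True by (simp add: good_def)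
    have lc: "leaf_count (del_nr u t) \<le> ell" using lc_del_nr[of u t] assms by simp
    have "hh n ell t (Some (del_nr u t)) = MM n ell * (phi n (fit n (Some t)) - phi n (fit n (Some (del_nr u t))))
                     + lam n ell * (real (leaf_count t) - real (leaf_count (del_nr u t)))"
      by (rule hh_acc[OF lc fit_mono]) (rule g)
    moreover have "MM n ell * (phi n (fit n (Some t)) - phi n (fit n (Some (del_nr u t)))) \<ge> 0"
      using MM_nonneg phi_mono[OF fit_mono[OF g]] by simp
    ultimately show ?thesis using False True by (simp add: DELr_def dterm_def)
  next
    case gF: False
    have "hh n ell t (DELr t u) \<ge> 0"
      by (rule hh_lb0) (simp add: DELr_def LeafCount_def lc_del_nr)
    thus ?thesis using gF by (simp add: dterm_def)
  qed
qed

lemma SUB_lb: "hh n ell t (SUBr t l j) \<ge> 0"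
  by (rule hh_lb0) (simp add: SUBr_def LeafCount_def lc_sub_leaf)


lemma E_DEL_lb:
  assumes "leaf_count t \<le> ell"
  shows "measure_pmf.expectation (innerp t DEL l g) (hh n ell t) \<ge> lam n ell * Dsum {} t / real (num_nodes t)"
proof -
  have "lam n ell * Dsum {} t = (\<Sum>u<num_nodes t. lam n ell * dterm {} t u)"
    by (simp add: Dsum_def sum_distrib_left)
  also have "\<dots> \<le> (\<Sum>u<num_nodes t. hh n ell t (DELr t u))"
    by (intro sum_mono DEL_lb assms)
  finally show ?thesis unfolding exp_inner_DEL using num_nodes_pos[of t]
    by (intro divide_right_mono) auto
qed

lemma E_DEL_nonneg:
  assumes "leaf_count t \<le> ell"
  shows "measure_pmf.expectation (innerp t DEL l g) (hh n ell t) \<ge> 0"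
proof -
  have "Dsum {} t \<ge> 0" unfolding Dsum_def by (intro sum_nonneg dterm_nonneg)
  hence "lam n ell * Dsum {} t / real (num_nodes t) \<ge> 0" using lam_nonneg[of n ell] by simp
  moreover have "lam n ell * Dsum {} t / real (num_nodes t) \<le> measure_pmf.expectation (innerp t DEL l g) (hh n ell t)"
    by (rule E_DEL_lb[OF assms])
  ultimately show ?thesis by linarith
qed

lemma E_SUB_nonneg:
  "measure_pmf.expectation (innerp t SUB l g) (hh n ell t) \<ge> 0"
  unfolding exp_inner_SUB by (intro divide_nonneg_nonneg sum_nonneg SUB_lb) auto

lemma E_INS_lb:
  "measure_pmf.expectation (innerp t INS l g) (hh n ell t) \<ge> - lam n ell"
proof -
  have "(\<Sum>u<num_nodes t. - lam n ell) \<le> (\<Sum>u<num_nodes t. (hh n ell t (INSr t l g u True) + hh n ell t (INSr t l g u False)) / 2)"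
  proof (intro sum_mono)
    fix u assume u: "u \<in> {..<num_nodes t}"
    have a: "hh n ell t (INSr t l g u True) \<ge> - lam n ell" using u by (intro INS_lb) simp
    have b: "hh n ell t (INSr t l g u False) \<ge> - lam n ell" using u by (intro INS_lb) simp
    have "- 2 * lam n ell \<le> hh n ell t (INSr t l g u True) + hh n ell t (INSr t l g u False)"
      using a b by linarith
    thus "- lam n ell \<le> (hh n ell t (INSr t l g u True) + hh n ell t (INSr t l g u False)) / 2"
      by simp
  qed
  hence "- lam n ell * real (num_nodes t) \<le> (\<Sum>u<num_nodes t. (hh n ell t (INSr t l g u True) + hh n ell t (INSr t l g u False)) / 2)"
    by (simp add: algebra_simps)
  thus ?thesis unfolding exp_inner_INS using num_nodes_pos[of t]
    by (simp add: le_divide_eq)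
qed

lemma E_INS_full:
  assumes "leaf_count t = ell"
  shows "measure_pmf.expectation (innerp t INS l g) (hh n ell t) = 0"
  unfolding exp_inner_INS using INS_full[OF _ assms] by simp

lemma E_INS_OR:
  assumes "leaf_count t < ell"
  shows "measure_pmf.expectation (innerp t INS l OR) (hh n ell t)
     \<ge> - lam n ell + MM n ell * (phi n (fit n (Some t)) - phi n (fit n (Some t) - rr n t l)) / real (num_nodes t)"
proof -
  define D where "D = MM n ell * (phi n (fit n (Some t)) - phi n (fit n (Some t) - rr n t l))"
  have "(\<Sum>u<num_nodes t. - lam n ell + (if u = 0 then D else 0))
     \<le> (\<Sum>u<num_nodes t. (hh n ell t (INSr t l OR u True) + hh n ell t (INSr t l OR u False)) / 2)"
  proof (intro sum_mono)
    fix u assume u: "u \<in> {..<num_nodes t}"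
    show "- lam n ell + (if u = 0 then D else 0) \<le> (hh n ell t (INSr t l OR u True) + hh n ell t (INSr t l OR u False)) / 2"
    proof (cases "u = 0")
      case True thus ?thesis using INS_root[OF assms] by (simp add: D_def)
    next
      case False
      have a: "hh n ell t (INSr t l OR u True) \<ge> - lam n ell" using u by (intro INS_lb) simp
      have b: "hh n ell t (INSr t l OR u False) \<ge> - lam n ell" using u by (intro INS_lb) simp
      have "- 2 * lam n ell \<le> hh n ell t (INSr t l OR u True) + hh n ell t (INSr t l OR u False)"
        using a b by linarith
      thus ?thesis using False by simp
    qed
  qed
  moreover have "(\<Sum>u<num_nodes t. - lam n ell + (if u = 0 then D else 0)) = (\<Sum>u<num_nodes t. - lam n ell) + (\<Sum>u<num_nodes t. (if u = 0 then D else 0))"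
    by (rule sum.distrib)
  moreover have "(\<Sum>u<num_nodes t. (if u = 0 then D else 0)) = D"
    using num_nodes_pos[of t] by (simp add: sum.delta)
  moreover have "(\<Sum>u<num_nodes t. - lam n ell) = - lam n ell * real (num_nodes t)" by simp
  ultimately have "- lam n ell * real (num_nodes t) + D \<le> (\<Sum>u<num_nodes t. (hh n ell t (INSr t l OR u True) + hh n ell t (INSr t l OR u False)) / 2)"
    by (simp add: algebra_simps)
  hence "(- lam n ell * real (num_nodes t) + D) / real (num_nodes t) \<le> measure_pmf.expectation (innerp t INS l OR) (hh n ell t)"
    unfolding exp_inner_INS using num_nodes_pos[of t] by (intro divide_right_mono) auto
  moreover have "(- lam n ell * real (num_nodes t) + D) / real (num_nodes t) = - lam n ell + D / real (num_nodes t)"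
    using num_nodes_pos[of t] by (simp add: field_simps)
  ultimately show ?thesis by (simp add: D_def)
qed

lemma sum_d_lb:
  assumes n: "n \<ge> 2" and F: "fit n (Some t) \<noteq> 0"
  shows "(\<Sum>l\<in>{1..n}. phi n (fit n (Some t)) - phi n (fit n (Some t) - rr n t l)) \<ge> 1 / 3"
proof -
  define F where "F = fit n (Some t)"
  have F1: "F \<ge> 1" using F by (simp add: F_def)
  have rrF: "rr n t l \<le> F" for l
    unfolding rr_def F_def fit_Some by (rule card_mono[OF finite_Zs]) auto
  define T where "T = real (\<Sum>S\<in>Zs n t. card S)"
  have sub: "Zs n t \<subseteq> Pow {1..n}" using Zs_sub[of n t] by blast
  have "(\<Sum>l\<in>{1..n}. rr n t l) = (\<Sum>S\<in>Zs n t. card S)" unfolding rr_def by (rule sum_card_in[OF sub])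
  hence "T = real (\<Sum>l\<in>{1..n}. rr n t l)" unfolding T_def by simp
  hence T: "T = (\<Sum>l\<in>{1..n}. real (rr n t l))" by (simp only: of_nat_sum)
  have T1: "real F \<le> T" unfolding T_def F_def fit_Some by (rule of_nat_mono[OF sum_card_ge[OF Zs_sub[of n t]]])
  have T2: "real (sig n F) * (real F - real n ^ sig n F) \<le> T"
    unfolding T_def F_def fit_Some using Zs_sub[of n t] by (intro sum_card_ge2 n) auto
  have "1 / 3 \<le> w n F * T" by (rule w_sum_bound[OF n F1 T1 T2])
  also have "\<dots> = (\<Sum>l\<in>{1..n}. real (rr n t l) * w n F)" unfolding T by (simp add: sum_distrib_left mult.commute)
  also have "\<dots> \<le> (\<Sum>l\<in>{1..n}. phi n F - phi n (F - rr n t l))"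
    by (intro sum_mono phi_diff rrF)
  finally show ?thesis by (simp add: F_def)
qed

lemma card_TV_le: "labels t \<subseteq> {1..n} \<Longrightarrow> card (TV t) \<le> n"
  using card_mono[of "{1..n}" "TV t"] TV_labels[of t] by auto

lemma Ehh_lb:
  assumes n: "n \<ge> 2" and ell: "ell > n" and lab: "labels t \<subseteq> {1..n}" and lc: "leaf_count t \<le> ell"
    and F: "fit n (Some t) \<noteq> 0"
  shows "measure_pmf.expectation (hvl n (Some t)) (hh n ell t) \<ge> 1"
proof -
  define h where "h = hh n ell t"
  define N where "N = num_nodes t"
  have "real (num_nodes t + 1) = real (2 * leaf_count t)" using num_nodes_lc[of t] by (simp only:)
  hence N: "real N + 1 = 2 * real (leaf_count t)" unfolding N_def by simp
  have Npos: "real N > 0" using num_nodes_pos[of t] by (simp add: N_def)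
  define SI where "SI = (\<Sum>l\<in>{1..n}. \<Sum>g\<in>{AND, OR}. measure_pmf.expectation (innerp t INS l g) h)"
  define SD where "SD = (\<Sum>l\<in>{1..n}. \<Sum>g\<in>{AND, OR}. measure_pmf.expectation (innerp t DEL l g) h)"
  define SS where "SS = (\<Sum>l\<in>{1..n}. \<Sum>g\<in>{AND, OR}. measure_pmf.expectation (innerp t SUB l g) h)"
  have E: "measure_pmf.expectation (hvl n (Some t)) h = (SI / real n / 2 + (SD / real n / 2 + SS / real n / 2)) / 3"
    using exp_hvl[of n t h] n by (simp add: SI_def SD_def SS_def)
  have SD0: "SD \<ge> 0" unfolding SD_def h_def by (intro sum_nonneg E_DEL_nonneg lc)
  have SS0: "SS \<ge> 0" unfolding SS_def h_def by (intro sum_nonneg E_SUB_nonneg)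
  have nr: "real n \<ge> 2" using n by simp
  show ?thesis
  proof (cases "leaf_count t < ell")
    case True
    define d where "d l = phi n (fit n (Some t)) - phi n (fit n (Some t) - rr n t l)" for l
    have "SI \<ge> (\<Sum>l\<in>{1..n}. - 2 * lam n ell + MM n ell / real N * d l)"
      unfolding SI_def
    proof (intro sum_mono)
      fix l
      have "measure_pmf.expectation (innerp t INS l AND) h \<ge> - lam n ell" unfolding h_def by (rule E_INS_lb)
      moreover have "measure_pmf.expectation (innerp t INS l OR) h \<ge> - lam n ell + MM n ell / real N * d l"
      proof -
        have "measure_pmf.expectation (innerp t INS l OR) h \<ge> - lam n ell + MM n ell * d l / real N"
          unfolding h_def d_def N_def by (rule E_INS_OR[OF True])
        moreover have "MM n ell * d l / real N = MM n ell / real N * d l" by simp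
        ultimately show ?thesis by linarith
      qed
      ultimately show "- 2 * lam n ell + MM n ell / real N * d l \<le> (\<Sum>g\<in>{AND, OR}. measure_pmf.expectation (innerp t INS l g) h)"
        by simp
    qed
    hence SI0: "SI \<ge> (\<Sum>l\<in>{1..n}. - 2 * lam n ell + MM n ell / real N * d l)" .
    have s1: "(\<Sum>l\<in>{1..n}. - 2 * lam n ell + MM n ell / real N * d l) = (\<Sum>l\<in>{1..n}. - 2 * lam n ell) + (\<Sum>l\<in>{1..n}. MM n ell / real N * d l)"
      by (rule sum.distrib)
    have s2: "(\<Sum>l\<in>{1..n}. - 2 * lam n ell) = - 2 * real n * lam n ell" by simp
    have s3: "(\<Sum>l\<in>{1..n}. MM n ell / real N * d l) = MM n ell / real N * (\<Sum>l\<in>{1..n}. d l)"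
      by (rule sum_distrib_left[symmetric])
    have SI1: "SI \<ge> - 2 * real n * lam n ell + MM n ell / real N * (\<Sum>l\<in>{1..n}. d l)"
      using SI0 s1 s2 s3 by linarith
    have sd: "(\<Sum>l\<in>{1..n}. d l) \<ge> 1 / 3" unfolding d_def by (rule sum_d_lb[OF n F])
    have "MM n ell / real N * (\<Sum>l\<in>{1..n}. d l) \<ge> MM n ell / real N * (1/3)"
      using MM_nonneg[of n ell] Npos sd by (intro mult_left_mono) auto
    hence SI2: "SI \<ge> - 2 * real n * lam n ell + MM n ell / (3 * real N)" using SI1 by simp
    have "real N \<le> 2 * real ell" using N lc by linarith
    hence "MM n ell / (3 * real N) \<ge> MM n ell / (6 * real ell)"
      using MM_nonneg[of n ell] Npos by (intro divide_left_mono) auto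
    also have "MM n ell / (6 * real ell) = 2 * real n * (3 + lam n ell)"
      using ell by (simp add: MM_def)
    finally have "SI \<ge> 6 * real n" using SI2 by (simp add: algebra_simps)
    hence "SI / real n / 2 \<ge> 3" using nr by (simp add: field_simps)
    moreover have "SD / real n / 2 \<ge> 0" "SS / real n / 2 \<ge> 0" using SD0 SS0 nr by auto
    ultimately show ?thesis unfolding E[unfolded h_def] by simp
  next
    case False
    hence k: "leaf_count t = ell" using lc by simp
    have "SI = 0" unfolding SI_def h_def using E_INS_full[OF k] by simp
    have Dl: "Dsum {} t \<ge> real ell - real n"
      using D_bound0[of t] card_TV_le[OF lab] k by linarith
    have "SD \<ge> (\<Sum>l\<in>{1..n}. \<Sum>g\<in>{AND, OR}. lam n ell * Dsum {} t / real N)"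
      unfolding SD_def h_def N_def by (intro sum_mono E_DEL_lb lc)
    also have "(\<Sum>l\<in>{1..n}. \<Sum>g\<in>{AND, OR}. lam n ell * Dsum {} t / real N) = 2 * real n * (lam n ell * Dsum {} t / real N)"
      by simp
    finally have SD1: "SD \<ge> 2 * real n * (lam n ell * Dsum {} t / real N)" .
    have "lam n ell * Dsum {} t \<ge> lam n ell * (real ell - real n)"
      using Dl lam_nonneg[of n ell] by (intro mult_left_mono) auto
    also have "lam n ell * (real ell - real n) = 6 * real ell"
      using ell by (simp add: lam_def of_nat_diff)
    finally have "lam n ell * Dsum {} t / real N \<ge> 6 * real ell / real N"
      using Npos by (intro divide_right_mono) auto
    moreover have "6 * real ell / real N \<ge> 3"
      using N k Npos by (simp add: field_simps)
    ultimately have X3: "lam n ell * Dsum {} t / real N \<ge> 3" by linarith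
    have "2 * real n * 3 \<le> 2 * real n * (lam n ell * Dsum {} t / real N)"
      using nr by (intro mult_left_mono[OF X3]) simp
    hence "SD \<ge> 2 * real n * 3" using SD1 by linarith
    hence "SD / real n / 2 \<ge> 3" using nr by (simp add: field_simps)
    moreover have "SS / real n / 2 \<ge> 0" using SS0 nr by auto
    ultimately show ?thesis unfolding E[unfolded h_def] using \<open>SI = 0\<close> by simp
  qed
qed


lemma chain_bound:
  fixes Phi :: "gp option \<Rightarrow> real" and I :: "gp option \<Rightarrow> bool"
  assumes I0: "I None"
    and Inv: "\<And>X Y. I X \<Longrightarrow> fit n X \<noteq> 0 \<Longrightarrow> Y \<in> set_pmf (rls_step n ell X) \<Longrightarrow> I Y"
    and nonneg: "\<And>X. I X \<Longrightarrow> Phi X \<ge> 0"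
    and fin: "\<And>X. I X \<Longrightarrow> fit n X \<noteq> 0 \<Longrightarrow> finite (set_pmf (rls_step n ell X))"
    and drift: "\<And>X. I X \<Longrightarrow> fit n X \<noteq> 0 \<Longrightarrow> measure_pmf.expectation (rls_step n ell X) Phi + 1 \<le> Phi X"
  shows "expected_time n ell \<le> ennreal (Phi None)"
proof -
  define D where "D t = stopped_dist n ell t" for t
  define P where "P t = ennreal (measure_pmf.prob (D t) {X. fit n X \<noteq> 0})" for t
  have supp: "\<forall>X\<in>set_pmf (D t). I X" for t
  proof (induction t)
    case 0 show ?case using I0 by (simp add: D_def)
  next
    case (Suc t)
    show ?case
    proof
      fix Y assume "Y \<in> set_pmf (D (Suc t))"
      then obtain X where X: "X \<in> set_pmf (D t)" "Y \<in> set_pmf (stopped_step n ell X)"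
        by (auto simp: D_def set_bind_pmf)
      have IX: "I X" using Suc X(1) by blast
      show "I Y"
      proof (cases "fit n X = 0")
        case True thus ?thesis using X(2) IX by (simp add: stopped_step_def)
      next
        case False thus ?thesis using X(2) IX Inv[of X Y] by (simp add: stopped_step_def)
      qed
    qed
  qed
  have pw: "(\<integral>\<^sup>+Y. ennreal (Phi Y) \<partial>stopped_step n ell X) + indicator {X. fit n X \<noteq> 0} X \<le> ennreal (Phi X)"
    if IX: "I X" for X
  proof (cases "fit n X = 0")
    case True
    thus ?thesis using nonneg[OF IX] by (simp add: stopped_step_def)
  next
    case False
    have nnY: "AE Y in rls_step n ell X. 0 \<le> Phi Y"
      using Inv[OF IX False] nonneg by (auto simp: AE_measure_pmf_iff)
    have intg: "integrable (rls_step n ell X) Phi"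
      by (rule integrable_measure_pmf_finite[OF fin[OF IX False]])
    have E0: "measure_pmf.expectation (rls_step n ell X) Phi \<ge> 0"
      by (rule integral_nonneg_AE[OF nnY])
    have "(\<integral>\<^sup>+Y. ennreal (Phi Y) \<partial>stopped_step n ell X) = ennreal (measure_pmf.expectation (rls_step n ell X) Phi)"
      using False by (simp add: stopped_step_def nn_integral_eq_integral[OF intg nnY])
    hence "(\<integral>\<^sup>+Y. ennreal (Phi Y) \<partial>stopped_step n ell X) + indicator {X. fit n X \<noteq> 0} X
        = ennreal (measure_pmf.expectation (rls_step n ell X) Phi + 1)"
      using False E0 by (simp add: ennreal_plus)
    also have "\<dots> \<le> ennreal (Phi X)"
      by (rule ennreal_leI[OF drift[OF IX False]])
    finally show ?thesis .
  qed
  have step: "P t + (\<integral>\<^sup>+X. ennreal (Phi X) \<partial>D (Suc t)) \<le> (\<integral>\<^sup>+X. ennreal (Phi X) \<partial>D t)" for t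
  proof -
    have "(\<integral>\<^sup>+X. ennreal (Phi X) \<partial>D (Suc t)) = (\<integral>\<^sup>+X. (\<integral>\<^sup>+Y. ennreal (Phi Y) \<partial>stopped_step n ell X) \<partial>D t)"
      by (simp add: D_def)
    moreover have "P t = (\<integral>\<^sup>+X. indicator {X. fit n X \<noteq> 0} X \<partial>D t)"
      by (simp add: P_def measure_pmf.emeasure_eq_measure)
    ultimately have "P t + (\<integral>\<^sup>+X. ennreal (Phi X) \<partial>D (Suc t))
        = (\<integral>\<^sup>+X. (\<integral>\<^sup>+Y. ennreal (Phi Y) \<partial>stopped_step n ell X) + indicator {X. fit n X \<noteq> 0} X \<partial>D t)"
      by (simp add: nn_integral_add add.commute)
    also have "\<dots> \<le> (\<integral>\<^sup>+X. ennreal (Phi X) \<partial>D t)"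
      by (rule nn_integral_mono_AE) (use supp[of t] pw in \<open>auto simp: AE_measure_pmf_iff\<close>)
    finally show ?thesis .
  qed
  have main: "(\<Sum>s<t. P s) + (\<integral>\<^sup>+X. ennreal (Phi X) \<partial>D t) \<le> ennreal (Phi None)" for t
  proof (induction t)
    case 0 show ?case using nonneg[OF I0] by (simp add: D_def)
  next
    case (Suc t)
    have "(\<Sum>s<Suc t. P s) + (\<integral>\<^sup>+X. ennreal (Phi X) \<partial>D (Suc t))
        = (\<Sum>s<t. P s) + (P t + (\<integral>\<^sup>+X. ennreal (Phi X) \<partial>D (Suc t)))"
      by (simp add: add.assoc)
    also have "\<dots> \<le> (\<Sum>s<t. P s) + (\<integral>\<^sup>+X. ennreal (Phi X) \<partial>D t)"
      by (intro add_left_mono step)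
    also have "\<dots> \<le> ennreal (Phi None)" by (rule Suc)
    finally show ?case .
  qed
  have "(\<Sum>s<t. P s) \<le> ennreal (Phi None)" for t
    using main[of t] by (metis add_increasing2 order_trans zero_le le_iff_add)
  hence "suminf P \<le> ennreal (Phi None)" by (intro suminf_le_const) auto
  moreover have "suminf P = expected_time n ell"
    unfolding expected_time_def P_def[abs_def] D_def[abs_def] by (rule refl)
  ultimately show ?thesis by simp
qed


definition Inv :: "nat \<Rightarrow> nat \<Rightarrow> gp option \<Rightarrow> bool" where
  "Inv n ell X = (case X of None \<Rightarrow> True | Some t \<Rightarrow> labels t \<subseteq> {1..n} \<and> leaf_count t \<le> ell)"

definition labs :: "gp option \<Rightarrow> nat set" where
  "labs X = (case X of None \<Rightarrow> {} | Some t \<Rightarrow> labels t)"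

lemma hvl_None: "hvl n None =
    bind_pmf (pmf_of_set {INS, DEL, SUB}) (\<lambda>op.
    bind_pmf (pmf_of_set {1..n}) (\<lambda>l.
    bind_pmf (pmf_of_set {AND, OR}) (\<lambda>g. return_pmf (Some (Leaf l)))))"
  unfolding hvl_def by simp

lemma finite_hvl: "n \<ge> 1 \<Longrightarrow> finite (set_pmf (hvl n X))"
  by (cases X) (auto simp: hvl_None hvl_Some set_bind_pmf finite_inner)

lemma set_innerp:
  assumes "Y \<in> set_pmf (innerp t op l g)"
  shows "labs Y \<subseteq> labels t \<union> {l}"
proof (cases op)
  case INS
  then obtain u b where "Y = INSr t l g u b"
    using assms neN[of t] by (auto simp: innerp_def INSr_def set_bind_pmf)
  moreover have "labels (at_node (\<lambda>s. if b then Node g s (Leaf l) else Node g (Leaf l) s) u t) \<subseteq> labels t \<union> {l}"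
    by (rule labels_at_node) auto
  ultimately show ?thesis by (simp add: INSr_def labs_def)
next
  case DEL
  have "Y \<in> (\<lambda>k. DELr t k) ` {..<num_nodes t}"
    using assms DEL neN[of t] by (simp add: innerp_def DELr_def[abs_def])
  then obtain u where "Y = DELr t u" by blast
  thus ?thesis using labels_del_nr[of u t] by (auto simp: DELr_def labs_def)
next
  case SUB
  then obtain j where "Y = SUBr t l j"
    using assms neK[of t] by (auto simp: innerp_def SUBr_def)
  thus ?thesis using labels_sub_leaf[of j l t] by (auto simp: SUBr_def labs_def)
qed

lemma set_hvl:
  assumes n: "n \<ge> 1" and Y: "Y \<in> set_pmf (hvl n X)"
  shows "labs Y \<subseteq> labs X \<union> {1..n}"
proof (cases X)
  case None
  thus ?thesis using Y n by (auto simp: hvl_None set_bind_pmf labs_def)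
next
  case (Some t)
  then obtain op l g where l: "l \<in> {1..n}" and Y': "Y \<in> set_pmf (innerp t op l g)"
    using Y n by (auto simp: hvl_Some set_bind_pmf)
  thus ?thesis using set_innerp[OF Y'] Some by (auto simp: labs_def)
qed

lemma Inv_step:
  assumes n: "n \<ge> 1" and I: "Inv n ell X" and Y: "Y \<in> set_pmf (rls_step n ell X)"
  shows "Inv n ell Y"
proof -
  obtain Y0 where Y0: "Y0 \<in> set_pmf (hvl n X)" "Y = accf n ell X Y0"
    using Y by (auto simp: rls_step_accf)
  show ?thesis
  proof (cases "LeafCount Y0 \<le> ell \<and> fit n Y0 \<le> fit n X")
    case False thus ?thesis using Y0 I by (auto simp: accf_def)
  next
    case True
    hence "Y = Y0" using Y0 by (simp add: accf_def)
    moreover have "labs Y0 \<subseteq> labs X \<union> {1..n}" by (rule set_hvl[OF n Y0(1)])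
    moreover have "labs X \<subseteq> {1..n}" using I by (cases X) (auto simp: Inv_def labs_def)
    ultimately show ?thesis using True by (cases Y0) (auto simp: Inv_def labs_def LeafCount_def)
  qed
qed

lemma Phi_nonneg: "Phi n ell X \<ge> 0"
proof (cases X)
  case None
  have "0 \<le> real (Lg n) * harm n" by (intro mult_nonneg_nonneg harm_nonneg) simp
  hence "0 \<le> MM n ell * (1 + real (Lg n) * harm n)" using MM_nonneg[of n ell] by simp
  moreover have "0 \<le> lam n ell * real ell" using lam_nonneg[of n ell] by simp
  ultimately show ?thesis using None by (simp add: Phi_def Bnd_def)
next
  case (Some t)
  thus ?thesis using MM_nonneg[of n ell] lam_nonneg[of n ell] phi_nonneg[of n]
    by (simp add: Phi_def)
qed

lemma drift_Some:
  assumes n: "n \<ge> 2" and ell: "ell > n" and I: "Inv n ell (Some t)" and F: "fit n (Some t) \<noteq> 0"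
  shows "measure_pmf.expectation (rls_step n ell (Some t)) (Phi n ell) + 1 \<le> Phi n ell (Some t)"
proof -
  have fin: "finite (set_pmf (hvl n (Some t)))" using n by (intro finite_hvl) simp
  have "measure_pmf.expectation (rls_step n ell (Some t)) (Phi n ell)
      = measure_pmf.expectation (hvl n (Some t)) (\<lambda>Y. Phi n ell (Some t) - hh n ell t Y)"
    by (simp add: rls_step_accf hh_def)
  also have "\<dots> = Phi n ell (Some t) - measure_pmf.expectation (hvl n (Some t)) (hh n ell t)"
  proof -
    have "measure_pmf.expectation (hvl n (Some t)) (\<lambda>Y. Phi n ell (Some t) - hh n ell t Y)
        = measure_pmf.expectation (hvl n (Some t)) (\<lambda>Y. Phi n ell (Some t)) - measure_pmf.expectation (hvl n (Some t)) (hh n ell t)"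
      by (rule Bochner_Integration.integral_diff) (rule integrable_measure_pmf_finite[OF fin])+
    thus ?thesis by simp
  qed
  finally have eq: "measure_pmf.expectation (rls_step n ell (Some t)) (Phi n ell) = Phi n ell (Some t) - measure_pmf.expectation (hvl n (Some t)) (hh n ell t)" .
  have "measure_pmf.expectation (hvl n (Some t)) (hh n ell t) \<ge> 1"
    using I by (intro Ehh_lb n ell F) (auto simp: Inv_def)
  thus ?thesis using eq by linarith
qed

lemma drift_None:
  assumes n: "n \<ge> 2" and ell: "ell > n"
  shows "measure_pmf.expectation (rls_step n ell None) (Phi n ell) + 1 \<le> Phi n ell None"
proof -
  have fin: "finite (set_pmf (rls_step n ell None))" using n finite_hvl[of n None]
    by (simp add: rls_step_accf)
  have "measure_pmf.expectation (rls_step n ell None) (Phi n ell) \<le> Bnd n ell"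
  proof (rule measure_pmf.integral_le_const)
    show "integrable (measure_pmf (rls_step n ell None)) (Phi n ell)"
      by (rule integrable_measure_pmf_finite[OF fin])
    show "AE Y in measure_pmf (rls_step n ell None). Phi n ell Y \<le> Bnd n ell"
    proof (unfold AE_measure_pmf_iff, intro ballI)
      fix Y assume "Y \<in> set_pmf (rls_step n ell None)"
      then obtain l where l: "l \<in> {1..n}" and Y: "Y = accf n ell None (Some (Leaf l))"
        using n by (auto simp: rls_step_accf hvl_None set_bind_pmf)
      have acc: "Y = Some (Leaf l)"
        using Y ell fit_less[of n "Leaf l"] by (simp add: accf_def LeafCount_def fit_None)
      have "phi n (fit n (Some (Leaf l))) \<le> 1 + real (Lg n) * harm n"
        by (rule phi_bound[OF n fit_less])
      hence "MM n ell * phi n (fit n (Some (Leaf l))) \<le> MM n ell * (1 + real (Lg n) * harm n)"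
        using MM_nonneg[of n ell] by (intro mult_left_mono) auto
      moreover have "lam n ell * 1 \<le> lam n ell * real ell"
        using ell lam_nonneg[of n ell] by (intro mult_left_mono) auto
      ultimately show "Phi n ell Y \<le> Bnd n ell" unfolding acc by (simp add: Phi_def Bnd_def)
    qed
  qed
  thus ?thesis by (simp add: Phi_def)
qed

theorem expected_time_bound:
  assumes n: "n \<ge> 2" and ell: "ell > n"
  shows "expected_time n ell \<le> ennreal (Bnd n ell + 1)"
proof -
  have "expected_time n ell \<le> ennreal (Phi n ell None)"
  proof (rule chain_bound[where I = "Inv n ell"])
    show "Inv n ell None" by (simp add: Inv_def)
    show "Inv n ell Y" if "Inv n ell X" "fit n X \<noteq> 0" "Y \<in> set_pmf (rls_step n ell X)" for X Y
      using Inv_step[OF _ that(1) that(3)] n by simp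
    show "Phi n ell X \<ge> 0" for X by (rule Phi_nonneg)
    show "finite (set_pmf (rls_step n ell X))" for X
      using finite_hvl[of n X] n by (simp add: rls_step_accf)
    show "measure_pmf.expectation (rls_step n ell X) (Phi n ell) + 1 \<le> Phi n ell X"
      if "Inv n ell X" "fit n X \<noteq> 0" for X
    proof (cases X)
      case None thus ?thesis using drift_None[OF n ell] by simp
    next
      case (Some t) thus ?thesis using drift_Some[OF n ell, of t] that by simp
    qed
  qed
  thus ?thesis by (simp add: Phi_def)
qed


lemma ln2_ge: "ln (2::real) \<ge> 1/2"
proof -
  have "ln (1/2::real) \<le> 1/2 - 1" by (rule ln_le_minus_one) simp
  thus ?thesis by (simp add: ln_div)
qed

lemma ln_ge_1: "n \<ge> 8 \<Longrightarrow> ln (real n) \<ge> 1"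
proof -
  assume n: "n \<ge> 8"
  have "ln (8::real) = ln (2^3)" by simp
  also have "\<dots> = 3 * ln 2" by (subst ln_realpow) auto
  finally have "ln (8::real) \<ge> 3/2" using ln2_ge by simp
  moreover have "ln (8::real) \<le> ln (real n)" using n by simp
  ultimately show ?thesis by simp
qed

lemma Lg_le: "n \<ge> 8 \<Longrightarrow> real (Lg n) \<le> 3 * ln (real n)"
proof -
  assume n: "n \<ge> 8"
  have "real (Lg n) < log 2 (real n) + 1" unfolding Lg_def using n by (intro ceillog2_less_log) simp
  also have "log 2 (real n) = ln (real n) / ln 2" by (simp add: log_def)
  also have "ln (real n) / ln 2 \<le> 2 * ln (real n)"
    using ln2_ge ln_ge_1[OF n] by (simp add: field_simps)
  finally show ?thesis using ln_ge_1[OF n] by simp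
qed

lemma harm_le2: "n \<ge> 8 \<Longrightarrow> harm n \<le> 2 * ln (real n)"
  using harm_le_ln[of n] ln_ge_1[of n] by simp

theorem theorem7:
  fixes c :: real
  assumes "c > 0"
  shows "\<exists>C N. \<forall>n \<ge> N.
           expected_time n (nat \<lfloor>(1 + c) * real n\<rfloor>)
             \<le> ennreal (C * real (nat \<lfloor>(1 + c) * real n\<rfloor>) * real n * (ln (real n))^2)"
proof -
  define La where "La = 12 * (1 + c) / c"
  define C where "C = 84 * (3 + La) + La + 1"
  define N where "N = max 8 (nat \<lceil>2 / c\<rceil>)"
  have La0: "La \<ge> 0" using assms by (simp add: La_def)
  show ?thesis
  proof (intro exI allI impI)
    fix n assume nN: "N \<le> n"
    define ell where "ell = nat \<lfloor>(1 + c) * real n\<rfloor>"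
    have n8: "n \<ge> 8" using nN by (simp add: N_def)
    have n2: "n \<ge> 2" using n8 by simp
    have cn: "c * real n \<ge> 2"
    proof -
      have "real n \<ge> 2 / c" using nN by (simp add: N_def)
      thus ?thesis using assms by (simp add: field_simps)
    qed
    have rell: "real ell = real_of_int \<lfloor>(1 + c) * real n\<rfloor>"
      unfolding ell_def using assms by (intro of_nat_nat) simp
    have ell_lo: "real ell \<ge> (1 + c) * real n - 1" using rell by linarith
    have ell_hi: "real ell \<le> (1 + c) * real n" using rell by linarith
    have ell_n: "ell > n" using ell_lo cn by (simp add: algebra_simps)
    have diff: "real (ell - n) \<ge> c * real n / 2"
      using ell_n ell_lo cn by (simp add: of_nat_diff algebra_simps)
    have npos: "real n > 0" using n8 by simp
    have ellpos: "real ell > 0" using ell_n by simp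
    have lam_le: "lam n ell \<le> La"
    proof -
      have "lam n ell = 6 * real ell / real (ell - n)" by (simp add: lam_def)
      also have "\<dots> \<le> 6 * ((1 + c) * real n) / (c * real n / 2)"
        using diff ell_hi assms npos by (intro frac_le) auto
      also have "\<dots> = La" using assms npos by (simp add: La_def field_simps)
      finally show ?thesis .
    qed
    define L where "L = ln (real n)"
    have L1: "L \<ge> 1" using ln_ge_1[OF n8] by (simp add: L_def)
    have L2: "L^2 \<ge> 1" using L1 by (simp add: one_le_power)
    have Lgh: "1 + real (Lg n) * harm n \<le> 7 * L^2"
    proof -
      have "real (Lg n) * harm n \<le> (3 * L) * (2 * L)"
        using Lg_le[OF n8] harm_le2[OF n8] harm_nonneg[of n] by (intro mult_mono) (auto simp: L_def)
      thus ?thesis using L2 by (simp add: power2_eq_square)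
    qed
    have et: "expected_time n ell \<le> ennreal (Bnd n ell + 1)"
      by (rule expected_time_bound[OF n2 ell_n])
    have P: "real ell * real n * L^2 \<ge> 0" using ellpos npos by simp
    have mmf: "MM n ell * (1 + real (Lg n) * harm n) \<le> (12 * real n * real ell * (3 + La)) * (7 * L^2)"
    proof (intro mult_mono)
      show "MM n ell \<le> 12 * real n * real ell * (3 + La)"
        unfolding MM_def using lam_le npos ellpos by (intro mult_left_mono) auto
    next
      have "0 \<le> real (Lg n) * harm n" by (intro mult_nonneg_nonneg harm_nonneg) simp
      thus "0 \<le> 1 + real (Lg n) * harm n" by simp
    qed (use Lgh La0 MM_nonneg[of n ell] in auto)
    have one: "1 \<le> real n * L^2"
    proof -
      have "1 * 1 \<le> real n * L^2" by (rule mult_mono) (use n8 L2 in auto)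
      thus ?thesis by simp
    qed
    have e1: "real ell \<ge> 1" using ell_n n8 by simp
    have big: "real ell \<le> real ell * real n * L^2"
    proof -
      have "real ell * 1 \<le> real ell * (real n * L^2)" by (rule mult_left_mono[OF one]) simp
      thus ?thesis by (simp add: mult.assoc)
    qed
    have "lam n ell * real ell \<le> La * real ell" by (rule mult_right_mono[OF lam_le]) simp
    also have "\<dots> \<le> La * (real ell * real n * L^2)" by (rule mult_left_mono[OF big La0])
    finally have lf: "lam n ell * real ell \<le> La * (real ell * real n * L^2)" .
    have of: "1 \<le> real ell * real n * L^2" using e1 big by linarith
    have "Bnd n ell + 1 \<le> C * real ell * real n * L^2"
      using mmf lf of unfolding Bnd_def C_def by (simp add: algebra_simps)
    thus "expected_time n (nat \<lfloor>(1 + c) * real n\<rfloor>)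
             \<le> ennreal (C * real (nat \<lfloor>(1 + c) * real n\<rfloor>) * real n * (ln (real n))^2)"
      using et unfolding ell_def[symmetric] L_def[symmetric]
      by (meson ennreal_leI order_trans)
  qed
qed


end
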